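(* Let $\mathcal{B}(\Omega)$ be a Bergman-type space with Rudin–Forelli constant $\kappa$, and let $Pf(z)=\int_\Omega\langle K_w,K_z\rangle f(w)\,d\sigma(w)$. (a) If $\kappa=0$, then $P$ is bounded on $L^p\big(\Omega;\|K_w\|^{-p}d\lambda(w)\big)$ for all $1\le p\le\infty$ (for $p=\infty$ this means the weighted sup-norm $\sup_w|f(w)|/\|K_w\|$). (b) If $\kappa>0$, then $P$ is bounded on $L^p(\Omega;d\sigma)$ for all $1<p<\infty$.
   Context: Notation: $A\lesssim B$ means $A\le CB$ for a constant $C$ independent of the relevant variables; $A\simeq B$ means $A\lesssim B$ and $B\lesssim A$. Bergman-type space: $\Omega\subset\mathbb{C}^n$ is a domain containing $0$ such that: (A.1) for each $z\in\Omega$ there is an involutive biholomorphic automorphism $\varphi_z$ of $\Omega$ with $\varphi_z(0)=z$; (A.2) there is a metric $d$ on $\Omega$ with $d(u,v)\simeq d(\varphi_z(u),\varphi_z(v))$ uniformly in $u,v,z$; $(\Omega,d)$ is separable and every closed $d$-ball is compact; $D(z,r)$ denotes the $d$-ball of center $z$ and radius $r$; (A.3) $\sigma$ is a finite Borel measure on $\Omega$, $\mathcal{B}(\Omega)$ is the space of holomorphic functions on $\Omega$ lying in $L^2(\Omega;d\sigma)$ with the $L^2(\sigma)$ norm $\|\cdot\|$ and inner product $\langle\cdot,\cdot\rangle$; $\mathcal{B}(\Omega)$ is a reproducing kernel Hilbert space with reproducing kernel $K_z$ ($f(z)=\langle f,K_z\rangle$) and normalized kernel $k_z=K_z/\|K_z\|$;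 $z\mapsto\|K_z\|$ is continuous on $(\Omega,d)$; (A.4) the measure $d\lambda(z):=\|K_z\|^2d\sigma(z)$ satisfies $\lambda(E)\simeq\lambda(\varphi_z(E))$ for Borel $E$, uniformly in $z$, and is doubling: $\lambda(D(z,2r))\le C\lambda(D(z,r))$ for all $z,r>0$; (A.5) $|\langle k_z,k_w\rangle|\simeq 1/\|K_{\varphi_z(w)}\|$ uniformly in $z,w$; (A.6) (Rudin–Forelli estimates) there is a constant $\kappa\in[0,2)$ such that, if $\kappa>0$, for all $r>\kappa>s>0$ one has $\sup_{z\in\Omega}\int_\Omega \frac{|\langle K_z,K_w\rangle|^{(r+s)/2}}{\|K_z\|^s\|K_w\|^r}d\lambda(w)<\infty$, and if $\kappa=0$ this holds for all $r=s>0$; (A.7) $\|K_z\|\to\infty$ as $d(z,0)\to\infty$. *)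

theory Defs
  imports "HOL-Analysis.Analysis"
begin

definition holo_fun :: "(complex ^ 'n) set \<Rightarrow> (complex ^ 'n \<Rightarrow> complex) \<Rightarrow> bool" where
  "holo_fun \<Omega> f \<longleftrightarrow> open \<Omega> \<and> (\<forall>z\<in>\<Omega>. \<exists>L. (f has_derivative L) (at z) \<and>
      (\<forall>c v. L (c *s v) = c * L v))"

definition holo_map :: "(complex ^ 'n) set \<Rightarrow> (complex ^ 'n \<Rightarrow> complex ^ 'm) \<Rightarrow> bool" where
  "holo_map \<Omega> F \<longleftrightarrow> open \<Omega> \<and> (\<forall>z\<in>\<Omega>. \<exists>L. (F has_derivative L) (at z) \<and>
      (\<forall>c v. L (c *s v) = c *s L v))"

definition ip :: "'a measure \<Rightarrow> ('a \<Rightarrow> complex) \<Rightarrow> ('a \<Rightarrow> complex) \<Rightarrow> complex" where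
  "ip \<sigma> f g = (LINT w|\<sigma>. f w * cnj (g w))"

definition l2norm :: "'a measure \<Rightarrow> ('a \<Rightarrow> complex) \<Rightarrow> real" where
  "l2norm \<sigma> f = sqrt (LINT w|\<sigma>. (cmod (f w))\<^sup>2)"

definition bspace :: "(complex ^ 'n) set \<Rightarrow> (complex ^ 'n) measure \<Rightarrow> (complex ^ 'n \<Rightarrow> complex) set" where
  "bspace \<Omega> \<sigma> = {f. holo_fun \<Omega> f \<and> f \<in> borel_measurable \<sigma> \<and> integrable \<sigma> (\<lambda>w. (cmod (f w))\<^sup>2)}"

text \<open>\<open>\<parallel>K_z\<parallel>\<close> and the normalized kernel \<open>k_z\<close>; \<open>K z\<close> is the function \<open>K_z\<close>.\<close>
definition knorm :: "'a measure \<Rightarrow> ('a \<Rightarrow> 'a \<Rightarrow> complex) \<Rightarrow> 'a \<Rightarrow> real" where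
  "knorm \<sigma> K z = l2norm \<sigma> (K z)"

definition nkern :: "'a measure \<Rightarrow> ('a \<Rightarrow> 'a \<Rightarrow> complex) \<Rightarrow> 'a \<Rightarrow> 'a \<Rightarrow> complex" where
  "nkern \<sigma> K z = (\<lambda>w. K z w / complex_of_real (knorm \<sigma> K z))"

definition lam :: "'a measure \<Rightarrow> ('a \<Rightarrow> 'a \<Rightarrow> complex) \<Rightarrow> 'a measure" where
  "lam \<sigma> K = density \<sigma> (\<lambda>z. ennreal ((knorm \<sigma> K z)\<^sup>2))"

text \<open>Bergman-type space (A.1)--(A.7), with Rudin--Forelli constant \<open>\<kappa>\<close>.
  \<open>\<phi> z\<close> is the automorphism \<open>\<phi>_z\<close>, \<open>d\<close> the metric on \<open>\<Omega>\<close>, \<open>\<sigma>\<close> the measure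
  (a finite Borel measure on \<open>\<complex>^n\<close> concentrated on \<open>\<Omega>\<close>), \<open>K\<close> the reproducing kernel.\<close>
definition bergman_type ::
  "(complex ^ 'n) set \<Rightarrow> (complex ^ 'n \<Rightarrow> complex ^ 'n \<Rightarrow> complex ^ 'n)
   \<Rightarrow> (complex ^ 'n \<Rightarrow> complex ^ 'n \<Rightarrow> real) \<Rightarrow> (complex ^ 'n) measure
   \<Rightarrow> (complex ^ 'n \<Rightarrow> complex ^ 'n \<Rightarrow> complex) \<Rightarrow> real \<Rightarrow> bool" where
  "bergman_type \<Omega> \<phi> d \<sigma> K \<kappa> \<longleftrightarrow>
     \<comment> \<open>domain containing 0\<close>
     open \<Omega> \<and> connected \<Omega> \<and> 0 \<in> \<Omega> \<and>
     \<comment> \<open>(A.1) involutive biholomorphic automorphisms\<close>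
     (\<forall>z\<in>\<Omega>. holo_map \<Omega> (\<phi> z) \<and> \<phi> z ` \<Omega> \<subseteq> \<Omega> \<and> (\<forall>u\<in>\<Omega>. \<phi> z (\<phi> z u) = u) \<and> \<phi> z 0 = z) \<and>
     \<comment> \<open>(A.2) metric\<close>
     Metric_space \<Omega> d \<and>
     (\<exists>C>0. \<forall>z\<in>\<Omega>. \<forall>u\<in>\<Omega>. \<forall>v\<in>\<Omega>.
        d (\<phi> z u) (\<phi> z v) \<le> C * d u v \<and> d u v \<le> C * d (\<phi> z u) (\<phi> z v)) \<and>
     separable_space (Metric_space.mtopology \<Omega> d) \<and>
     (\<forall>z\<in>\<Omega>. \<forall>r. compactin (Metric_space.mtopology \<Omega> d) (Metric_space.mcball \<Omega> d z r)) \<and>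
     \<comment> \<open>(A.3) finite Borel measure, reproducing kernel\<close>
     finite_measure \<sigma> \<and> sets \<sigma> = sets borel \<and> emeasure \<sigma> (UNIV - \<Omega>) = 0 \<and>
     (\<forall>z\<in>\<Omega>. K z \<in> bspace \<Omega> \<sigma>) \<and>
     (\<forall>f\<in>bspace \<Omega> \<sigma>. \<forall>z\<in>\<Omega>. f z = ip \<sigma> f (K z)) \<and>
     continuous_map (Metric_space.mtopology \<Omega> d) euclideanreal (knorm \<sigma> K) \<and>
     \<comment> \<open>(A.4) quasi-invariance and doubling of \<open>\<lambda>\<close>\<close>
     (\<exists>C::real>0. \<forall>z\<in>\<Omega>. \<forall>E\<in>sets borel. E \<subseteq> \<Omega> \<longrightarrow>
        emeasure (lam \<sigma> K) (\<phi> z ` E) \<le> ennreal C * emeasure (lam \<sigma> K) E \<and>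
        emeasure (lam \<sigma> K) E \<le> ennreal C * emeasure (lam \<sigma> K) (\<phi> z ` E)) \<and>
     (\<forall>z\<in>\<Omega>. \<forall>r>0. Metric_space.mball \<Omega> d z r \<in> sets \<sigma>) \<and>
     (\<exists>C::real. \<forall>z\<in>\<Omega>. \<forall>r>0.
        emeasure (lam \<sigma> K) (Metric_space.mball \<Omega> d z (2 * r))
          \<le> ennreal C * emeasure (lam \<sigma> K) (Metric_space.mball \<Omega> d z r)) \<and>
     \<comment> \<open>(A.5)\<close>
     (\<exists>C>0. \<forall>z\<in>\<Omega>. \<forall>w\<in>\<Omega>.
        cmod (ip \<sigma> (nkern \<sigma> K z) (nkern \<sigma> K w)) \<le> C / knorm \<sigma> K (\<phi> z w) \<and>
        1 / knorm \<sigma> K (\<phi> z w) \<le> C * cmod (ip \<sigma> (nkern \<sigma> K z) (nkern \<sigma> K w))) \<and>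
     \<comment> \<open>(A.6) Rudin--Forelli estimates\<close>
     0 \<le> \<kappa> \<and> \<kappa> < 2 \<and>
     (\<kappa> > 0 \<longrightarrow> (\<forall>r s. r > \<kappa> \<and> \<kappa> > s \<and> s > 0 \<longrightarrow>
        (\<exists>M::real. \<forall>z\<in>\<Omega>. (\<integral>\<^sup>+ w. ennreal (cmod (ip \<sigma> (K z) (K w)) powr ((r + s) / 2)
            / (knorm \<sigma> K z powr s * knorm \<sigma> K w powr r)) \<partial>lam \<sigma> K) \<le> ennreal M))) \<and>
     (\<kappa> = 0 \<longrightarrow> (\<forall>r>0.
        (\<exists>M::real. \<forall>z\<in>\<Omega>. (\<integral>\<^sup>+ w. ennreal (cmod (ip \<sigma> (K z) (K w)) powr ((r + r) / 2)
            / (knorm \<sigma> K z powr r * knorm \<sigma> K w powr r)) \<partial>lam \<sigma> K) \<le> ennreal M))) \<and>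
     \<comment> \<open>(A.7)\<close>
     (\<forall>M. \<exists>R. \<forall>z\<in>\<Omega>. d z 0 > R \<longrightarrow> knorm \<sigma> K z > M)"

definition Pop :: "'a measure \<Rightarrow> ('a \<Rightarrow> 'a \<Rightarrow> complex) \<Rightarrow> ('a \<Rightarrow> complex) \<Rightarrow> 'a \<Rightarrow> complex" where
  "Pop \<sigma> K f z = (LINT w|\<sigma>. ip \<sigma> (K w) (K z) * f w)"

definition wmeas :: "'a measure \<Rightarrow> ('a \<Rightarrow> 'a \<Rightarrow> complex) \<Rightarrow> real \<Rightarrow> 'a measure" where
  "wmeas \<sigma> K p = density (lam \<sigma> K) (\<lambda>w. ennreal (knorm \<sigma> K w powr (- p)))"

definition P_bounded_Lp :: "'a measure \<Rightarrow> ('a \<Rightarrow> 'a \<Rightarrow> complex) \<Rightarrow> 'a measure \<Rightarrow> real \<Rightarrow> bool" where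
  "P_bounded_Lp \<sigma> K \<mu> p \<longleftrightarrow> (\<exists>C::real. \<forall>f \<in> borel_measurable \<mu>.
      (\<integral>\<^sup>+ z. ennreal (cmod (Pop \<sigma> K f z) powr p) \<partial>\<mu>)
        \<le> ennreal C * (\<integral>\<^sup>+ w. ennreal (cmod (f w) powr p) \<partial>\<mu>))"

definition P_bounded_wsup :: "'a set \<Rightarrow> 'a measure \<Rightarrow> ('a \<Rightarrow> 'a \<Rightarrow> complex) \<Rightarrow> bool" where
  "P_bounded_wsup \<Omega> \<sigma> K \<longleftrightarrow> (\<exists>C::real. \<forall>f \<in> borel_measurable \<sigma>.
      (SUP w\<in>\<Omega>. ennreal (cmod (Pop \<sigma> K f w) / knorm \<sigma> K w))
        \<le> ennreal C * (SUP w\<in>\<Omega>. ennreal (cmod (f w) / knorm \<sigma> K w)))"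

end

theory Submission
  imports Defs
begin


lemma young_pt:
  fixes p c t v g :: real
  assumes p: "p > 1" and c: "c > 0" and t: "t \<ge> 0" and v: "v > 0" and g: "g \<ge> 0"
  shows "t * g \<le> ((p - 1) / p) * c * (t * v) + (1 / p) * c powr (1 - p) * (t * v powr (1 - p) * g powr p)"
proof (cases "t = 0 \<or> g = 0")
  case True
  have "0 \<le> ((p - 1) / p) * c * (t * v) + (1 / p) * c powr (1 - p) * (t * v powr (1 - p) * g powr p)"
    using p c t v g by (intro add_nonneg_nonneg mult_nonneg_nonneg) auto
  then show ?thesis using True by auto
next
  case False
  then have t': "t > 0" and g': "g > 0" using t g by auto
  define a where "a = c * (t * v)"
  define b where "b = c powr (1 - p) * (t * v powr (1 - p) * g powr p)"
  have a: "a > 0" and b: "b > 0" using c t' v g' by (auto simp: a_def b_def)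
  have Y: "a powr ((p - 1) / p) * b powr (1 / p) \<le> ((p - 1) / p) * a + (1 / p) * b"
    using p a b by (intro Youngs_inequality_0) (auto simp: field_simps)
  have "ln (a powr ((p - 1) / p) * b powr (1 / p)) = ((p - 1) / p) * ln a + (1 / p) * ln b"
    using a b by (simp add: ln_mult ln_powr)
  also have "\<dots> = ln t + ln g"
    using c t' v g' p unfolding a_def b_def
    by (simp add: ln_mult ln_powr field_simps)
  also have "\<dots> = ln (t * g)" using t' g' by (simp add: ln_mult)
  finally have "a powr ((p - 1) / p) * b powr (1 / p) = t * g"
    using a b t' g' by (subst (asm) ln_inj_iff) auto
  then show ?thesis using Y unfolding a_def b_def by (simp add: mult.assoc)
qed

lemma opt_c:
  fixes p A b :: real
  assumes p: "p > 1" and A: "A > 0" and b: "b > 0"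
  shows "((p - 1) / p) * ((b / A) powr (1 / p)) * A + (1 / p) * ((b / A) powr (1 / p)) powr (1 - p) * b
         = A powr ((p - 1) / p) * b powr (1 / p)"
proof -
  have e1: "((b / A) powr (1 / p)) * A = A powr ((p - 1) / p) * b powr (1 / p)"
  proof -
    have "ln (((b / A) powr (1 / p)) * A) = ln (A powr ((p - 1) / p) * b powr (1 / p))"
      using p A b by (simp add: ln_mult ln_powr ln_div field_simps)
    then show ?thesis using A b by (subst (asm) ln_inj_iff) auto
  qed
  have e2: "((b / A) powr (1 / p)) powr (1 - p) * b = A powr ((p - 1) / p) * b powr (1 / p)"
  proof -
    have "ln (((b / A) powr (1 / p)) powr (1 - p) * b) = ln (A powr ((p - 1) / p) * b powr (1 / p))"
      using p A b by (simp add: ln_mult ln_powr ln_div field_simps)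
    then show ?thesis using A b by (subst (asm) ln_inj_iff) auto
  qed
  have "((p - 1) / p) * ((b / A) powr (1 / p)) * A + (1 / p) * ((b / A) powr (1 / p)) powr (1 - p) * b
      = ((p - 1) / p) * (((b / A) powr (1 / p)) * A) + (1 / p) * (((b / A) powr (1 / p)) powr (1 - p) * b)"
    by (simp add: mult.assoc)
  also have "\<dots> = (((p - 1) / p) + 1 / p) * (A powr ((p - 1) / p) * b powr (1 / p))"
    unfolding e1 e2 by (simp add: algebra_simps)
  also have "((p - 1) / p) + 1 / p = 1" using p by (simp add: field_simps)
  finally show ?thesis by simp
qed

lemma holder_pt:
  fixes M :: "'a measure" and t v g :: "'a \<Rightarrow> real" and p A y :: real
  assumes p: "p \<ge> 1" and A: "A > 0"
    and tm[measurable]: "t \<in> borel_measurable M" and vm[measurable]: "v \<in> borel_measurable M"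
    and gm[measurable]: "g \<in> borel_measurable M"
    and t0: "\<And>w. t w \<ge> 0" and v0: "\<And>w. v w > 0" and g0: "\<And>w. g w \<ge> 0"
    and HA: "(\<integral>\<^sup>+ w. ennreal (t w * v w) \<partial>M) \<le> ennreal A"
    and y0: "0 \<le> y" and Y: "ennreal y \<le> (\<integral>\<^sup>+ w. ennreal (t w * g w) \<partial>M)"
  shows "ennreal (y powr p) \<le> ennreal (A powr (p - 1)) * (\<integral>\<^sup>+ w. ennreal (t w * v w powr (1 - p) * g w powr p) \<partial>M)"
proof (cases "p = 1")
  case True
  have "(\<integral>\<^sup>+ w. ennreal (t w * v w powr (1 - p) * g w powr p) \<partial>M) = (\<integral>\<^sup>+ w. ennreal (t w * g w) \<partial>M)"
    using True g0 v0 by (intro nn_integral_cong) (simp add: less_imp_le[OF v0] order.strict_implies_not_eq[OF v0, symmetric])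
  then show ?thesis using True Y y0 A by simp
next
  case False
  then have p1: "p > 1" using p by simp
  define B where "B = (\<integral>\<^sup>+ w. ennreal (t w * v w powr (1 - p) * g w powr p) \<partial>M)"
  show ?thesis
  proof (cases "B = top")
    case True
    have "A powr (p - 1) > 0" using A by simp
    then show ?thesis using True unfolding B_def[symmetric] by (simp add: ennreal_mult_top)
  next
    case False
    then obtain b where b0: "b \<ge> 0" and Bb: "B = ennreal b" by (cases B) auto
    have key: "y \<le> ((p - 1) / p) * c * A + (1 / p) * c powr (1 - p) * b" if c: "c > 0" for c
    proof -
      have "ennreal y \<le> (\<integral>\<^sup>+ w. ennreal (t w * g w) \<partial>M)" by (rule Y)
      also have "\<dots> \<le> (\<integral>\<^sup>+ w. ennreal (((p - 1) / p) * c) * ennreal (t w * v w)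
             + ennreal ((1 / p) * c powr (1 - p)) * ennreal (t w * v w powr (1 - p) * g w powr p) \<partial>M)"
      proof (rule nn_integral_mono)
        fix w
        have "t w * g w \<le> ((p - 1) / p) * c * (t w * v w) + (1 / p) * c powr (1 - p) * (t w * v w powr (1 - p) * g w powr p)"
          by (rule young_pt[OF p1 c t0 v0 g0])
        then have "ennreal (t w * g w) \<le> ennreal (((p - 1) / p) * c * (t w * v w) + (1 / p) * c powr (1 - p) * (t w * v w powr (1 - p) * g w powr p))"
          by (rule ennreal_leI)
        also have "\<dots> = ennreal (((p - 1) / p) * c) * ennreal (t w * v w)
             + ennreal ((1 / p) * c powr (1 - p)) * ennreal (t w * v w powr (1 - p) * g w powr p)"
        proof -
          have a1: "0 \<le> ((p - 1) / p) * c" and b1: "0 \<le> t w * v w"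
            and a2: "0 \<le> (1 / p) * c powr (1 - p)" and b2: "0 \<le> t w * v w powr (1 - p) * g w powr p"
            using p1 c t0[of w] v0[of w] g0[of w] by (auto intro!: mult_nonneg_nonneg less_imp_le)
          show ?thesis
            unfolding ennreal_plus[OF mult_nonneg_nonneg[OF a1 b1] mult_nonneg_nonneg[OF a2 b2]]
              ennreal_mult[OF a1 b1] ennreal_mult[OF a2 b2] ..
        qed
        finally show "ennreal (t w * g w) \<le> \<dots>" .
      qed
      also have "\<dots> = ennreal (((p - 1) / p) * c) * (\<integral>\<^sup>+ w. ennreal (t w * v w) \<partial>M)
             + ennreal ((1 / p) * c powr (1 - p)) * B"
        unfolding B_def by (subst nn_integral_add) (auto simp: nn_integral_cmult)
      also have "\<dots> \<le> ennreal (((p - 1) / p) * c) * ennreal A + ennreal ((1 / p) * c powr (1 - p)) * ennreal b"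
        unfolding Bb by (intro add_mono mult_left_mono HA) auto
      also have "\<dots> = ennreal (((p - 1) / p) * c * A + (1 / p) * c powr (1 - p) * b)"
      proof -
        have a1: "0 \<le> ((p - 1) / p) * c" and b1: "0 \<le> A"
          and a2: "0 \<le> (1 / p) * c powr (1 - p)"
          using p1 c A by (auto intro!: mult_nonneg_nonneg)
        show ?thesis
          unfolding ennreal_plus[OF mult_nonneg_nonneg[OF a1 b1] mult_nonneg_nonneg[OF a2 b0]]
            ennreal_mult[OF a1 b1] ennreal_mult[OF a2 b0] ..
      qed
      finally show ?thesis
        using p1 c A b0 by (subst (asm) ennreal_le_iff) (auto intro!: add_nonneg_nonneg mult_nonneg_nonneg)
    qed
    show ?thesis
    proof (cases "b = 0")
      case True
      have "y \<le> 0"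
      proof (rule field_le_epsilon)
        fix e :: real assume e: "e > 0"
        define c where "c = e * p / ((p - 1) * A)"
        have c: "c > 0" using e p1 A by (simp add: c_def)
        have "y \<le> ((p - 1) / p) * c * A" using key[OF c] True by simp
        also have "\<dots> = e" using p1 A by (simp add: c_def field_simps)
        finally show "y \<le> 0 + e" by simp
      qed
      then have "y = 0" using y0 by simp
      then show ?thesis using p1 by simp
    next
      case False
      then have b: "b > 0" using b0 by simp
      have "y \<le> A powr ((p - 1) / p) * b powr (1 / p)"
        using key[of "(b / A) powr (1 / p)"] b A opt_c[OF p1 A b] by simp
      then have "y powr p \<le> (A powr ((p - 1) / p) * b powr (1 / p)) powr p"
        using y0 p1 by (intro powr_mono2) auto
      also have "\<dots> = A powr (p - 1) * b"
        using A b p1 by (simp add: powr_mult powr_powr)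
      finally have "ennreal (y powr p) \<le> ennreal (A powr (p - 1) * b)" by (rule ennreal_leI)
      then show ?thesis using A b unfolding B_def[symmetric] Bb by (simp add: ennreal_mult)
    qed
  qed
qed

lemma schur:
  fixes M :: "'a measure" and O' :: "'a set" and t :: "'a \<Rightarrow> 'a \<Rightarrow> real"
    and v u g y :: "'a \<Rightarrow> real" and C1 C2 p :: real
  assumes sf: "sigma_finite_measure M" and sp: "space M = UNIV"
    and p: "p \<ge> 1" and C1: "C1 > 0" and C2: "C2 \<ge> 0"
    and tm[measurable]: "(\<lambda>x. t (fst x) (snd x)) \<in> borel_measurable (M \<Otimes>\<^sub>M M)"
    and t0: "\<And>z w. t z w \<ge> 0"
    and vm[measurable]: "v \<in> borel_measurable M" and v0: "\<And>w. v w > 0"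
    and um[measurable]: "u \<in> borel_measurable M" and u0: "\<And>w. u w \<ge> 0"
    and gm[measurable]: "g \<in> borel_measurable M" and g0: "\<And>w. g w \<ge> 0"
    and AEO: "AE x in M. x \<in> O'"
    and H1: "\<And>z. z \<in> O' \<Longrightarrow> (\<integral>\<^sup>+ w. ennreal (t z w * v w) \<partial>M) \<le> ennreal (C1 * v z)"
    and H2: "\<And>w. w \<in> O' \<Longrightarrow> (\<integral>\<^sup>+ z. ennreal (t z w * v z powr (p - 1) * u z) \<partial>M) \<le> ennreal (C2 * v w powr (p - 1) * u w)"
    and y0: "\<And>z. y z \<ge> 0"
    and Y: "\<And>z. z \<in> O' \<Longrightarrow> ennreal (y z) \<le> (\<integral>\<^sup>+ w. ennreal (t z w * g w) \<partial>M)"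
  shows "(\<integral>\<^sup>+ z. ennreal (y z powr p) \<partial>density M (\<lambda>z. ennreal (u z)))
     \<le> ennreal (C1 powr (p - 1) * C2) * (\<integral>\<^sup>+ w. ennreal (g w powr p) \<partial>density M (\<lambda>z. ennreal (u z)))"
proof -
  interpret sf: sigma_finite_measure M by (rule sf)
  interpret P: pair_sigma_finite M M by (simp add: pair_sigma_finite.intro sf)
  define B where "B z = (\<integral>\<^sup>+ w. ennreal (t z w * v w powr (1 - p) * g w powr p) \<partial>M)" for z
  define F where "F z w = u z * v z powr (p - 1) * t z w * (v w powr (1 - p) * g w powr p)" for z w
  have tm1[measurable]: "(\<lambda>w. t z w) \<in> borel_measurable M" for z
    using measurable_Pair2[OF tm, of z] sp by simp
  have tm2[measurable]: "(\<lambda>z. t z w) \<in> borel_measurable M" for w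
    using measurable_Pair1[OF tm, of w] sp by simp
  have Fm[measurable]: "(\<lambda>x. ennreal (F (fst x) (snd x))) \<in> borel_measurable (M \<Otimes>\<^sub>M M)"
    unfolding F_def by measurable
  have Bm: "B \<in> borel_measurable M"
  proof -
    have "(\<lambda>x. ennreal (t (fst x) (snd x) * v (snd x) powr (1 - p) * g (snd x) powr p)) \<in> borel_measurable (M \<Otimes>\<^sub>M M)"
      by measurable
    then show ?thesis unfolding B_def
      using sf.borel_measurable_nn_integral[of "\<lambda>z w. ennreal (t z w * v w powr (1 - p) * g w powr p)" M] by simp
  qed
  have AEd: "AE x in density M (\<lambda>z. ennreal (u z)). x \<in> O'"
    by (subst AE_density) (use AEO in \<open>auto elim!: eventually_mono\<close>)
  have "(\<integral>\<^sup>+ z. ennreal (y z powr p) \<partial>density M (\<lambda>z. ennreal (u z)))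
      \<le> (\<integral>\<^sup>+ z. ennreal ((C1 * v z) powr (p - 1)) * B z \<partial>density M (\<lambda>z. ennreal (u z)))"
  proof (rule nn_integral_mono_AE)
    show "AE z in density M (\<lambda>z. ennreal (u z)). ennreal (y z powr p) \<le> ennreal ((C1 * v z) powr (p - 1)) * B z"
      using AEd
    proof (rule eventually_mono)
      fix z assume z: "z \<in> O'"
      show "ennreal (y z powr p) \<le> ennreal ((C1 * v z) powr (p - 1)) * B z"
        unfolding B_def
        by (rule holder_pt[OF p _ tm1 vm gm t0 v0 g0 H1[OF z] y0 Y[OF z]]) (use C1 v0[of z] in simp)
    qed
  qed
  also have "\<dots> = (\<integral>\<^sup>+ z. ennreal (u z) * (ennreal ((C1 * v z) powr (p - 1)) * B z) \<partial>M)"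
    by (rule nn_integral_density) (use Bm in measurable)
  also have "\<dots> = (\<integral>\<^sup>+ z. ennreal (C1 powr (p - 1)) * (\<integral>\<^sup>+ w. ennreal (F z w) \<partial>M) \<partial>M)"
  proof (rule nn_integral_cong)
    fix z
    have nn: "0 \<le> u z * v z powr (p - 1)" using u0[of z] by simp
    have "ennreal (u z) * (ennreal ((C1 * v z) powr (p - 1)) * B z)
        = ennreal (C1 powr (p - 1)) * (ennreal (u z * v z powr (p - 1)) * B z)"
      using C1 v0[of z] u0[of z] by (simp add: powr_mult ennreal_mult[symmetric] mult_ac)
    also have "ennreal (u z * v z powr (p - 1)) * B z = (\<integral>\<^sup>+ w. ennreal (u z * v z powr (p - 1)) * ennreal (t z w * v w powr (1 - p) * g w powr p) \<partial>M)"
      unfolding B_def by (rule nn_integral_cmult[symmetric]) measurable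
    also have "\<dots> = (\<integral>\<^sup>+ w. ennreal (F z w) \<partial>M)"
      unfolding F_def using nn t0 v0 g0 by (intro nn_integral_cong) (simp add: ennreal_mult[symmetric] mult_ac)
    finally show "ennreal (u z) * (ennreal ((C1 * v z) powr (p - 1)) * B z) = ennreal (C1 powr (p - 1)) * (\<integral>\<^sup>+ w. ennreal (F z w) \<partial>M)" .
  qed
  also have "\<dots> = ennreal (C1 powr (p - 1)) * (\<integral>\<^sup>+ z. (\<integral>\<^sup>+ w. ennreal (F z w) \<partial>M) \<partial>M)"
    by (rule nn_integral_cmult) measurable
  also have "(\<integral>\<^sup>+ z. (\<integral>\<^sup>+ w. ennreal (F z w) \<partial>M) \<partial>M) = (\<integral>\<^sup>+ w. (\<integral>\<^sup>+ z. ennreal (F z w) \<partial>M) \<partial>M)"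
    by (rule P.Fubini'[symmetric]) (use Fm in simp)
  also have "\<dots> \<le> (\<integral>\<^sup>+ w. ennreal C2 * (ennreal (u w) * ennreal (g w powr p)) \<partial>M)"
  proof (rule nn_integral_mono_AE)
    show "AE w in M. (\<integral>\<^sup>+ z. ennreal (F z w) \<partial>M) \<le> ennreal C2 * (ennreal (u w) * ennreal (g w powr p))"
      using AEO
    proof (rule eventually_mono)
      fix w assume w: "w \<in> O'"
      have nn: "0 \<le> v w powr (1 - p) * g w powr p" by simp
      have "(\<integral>\<^sup>+ z. ennreal (F z w) \<partial>M) = (\<integral>\<^sup>+ z. ennreal (v w powr (1 - p) * g w powr p) * ennreal (t z w * v z powr (p - 1) * u z) \<partial>M)"
        unfolding F_def using nn t0 u0 by (intro nn_integral_cong) (simp add: ennreal_mult[symmetric] mult_ac)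
      also have "\<dots> = ennreal (v w powr (1 - p) * g w powr p) * (\<integral>\<^sup>+ z. ennreal (t z w * v z powr (p - 1) * u z) \<partial>M)"
        by (rule nn_integral_cmult) measurable
      also have "\<dots> \<le> ennreal (v w powr (1 - p) * g w powr p) * ennreal (C2 * v w powr (p - 1) * u w)"
        by (rule mult_left_mono[OF H2[OF w]]) simp
      also have "\<dots> = ennreal (v w powr (1 - p) * g w powr p * (C2 * v w powr (p - 1) * u w))"
        by (rule ennreal_mult'[OF nn, symmetric])
      also have "v w powr (1 - p) * g w powr p * (C2 * v w powr (p - 1) * u w) = C2 * (u w * g w powr p)"
      proof -
        have "v w powr (1 - p) * v w powr (p - 1) = 1"
          using v0[of w] by (simp add: powr_add[symmetric])
        then show ?thesis by (simp add: algebra_simps)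
      qed
      also have "ennreal (C2 * (u w * g w powr p)) = ennreal C2 * (ennreal (u w) * ennreal (g w powr p))"
        using C2 u0[of w] by (simp add: ennreal_mult)
      finally show "(\<integral>\<^sup>+ z. ennreal (F z w) \<partial>M) \<le> ennreal C2 * (ennreal (u w) * ennreal (g w powr p))" .
    qed
  qed
  also have "\<dots> = ennreal C2 * (\<integral>\<^sup>+ w. ennreal (u w) * ennreal (g w powr p) \<partial>M)"
    by (rule nn_integral_cmult) measurable
  also have "(\<integral>\<^sup>+ w. ennreal (u w) * ennreal (g w powr p) \<partial>M) = (\<integral>\<^sup>+ w. ennreal (g w powr p) \<partial>density M (\<lambda>z. ennreal (u z)))"
    by (rule nn_integral_density[symmetric]) measurable
  finally have "(\<integral>\<^sup>+ z. ennreal (y z powr p) \<partial>density M (\<lambda>z. ennreal (u z)))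
      \<le> ennreal (C1 powr (p - 1)) * (ennreal C2 * (\<integral>\<^sup>+ w. ennreal (g w powr p) \<partial>density M (\<lambda>z. ennreal (u z))))"
    by (simp add: mult_left_mono)
  then show ?thesis using C2 by (simp add: ennreal_mult mult.assoc)
qed



locale bt =
  fixes \<Omega> :: "(complex ^ 'n) set"
    and \<phi> :: "complex ^ 'n \<Rightarrow> complex ^ 'n \<Rightarrow> complex ^ 'n"
    and d :: "complex ^ 'n \<Rightarrow> complex ^ 'n \<Rightarrow> real"
    and \<sigma> :: "(complex ^ 'n) measure"
    and K :: "complex ^ 'n \<Rightarrow> complex ^ 'n \<Rightarrow> complex"
    and \<kappa> :: real
  assumes BT: "bergman_type \<Omega> \<phi> d \<sigma> K \<kappa>"
begin

lemma openO: "open \<Omega>"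
  by (rule BT[unfolded bergman_type_def, THEN conjunct1])

lemma zeroO: "0 \<in> \<Omega>"
  by (rule BT[unfolded bergman_type_def, THEN conjunct2, THEN conjunct2, THEN conjunct1])

lemma fin: "finite_measure \<sigma>"
  by (rule BT[unfolded bergman_type_def, THEN conjunct2, THEN conjunct2, THEN conjunct2, THEN conjunct2, THEN conjunct2, THEN conjunct2, THEN conjunct2, THEN conjunct2, THEN conjunct1])

lemma sets_sigma: "sets \<sigma> = sets borel"
  by (rule BT[unfolded bergman_type_def, THEN conjunct2, THEN conjunct2, THEN conjunct2, THEN conjunct2, THEN conjunct2, THEN conjunct2, THEN conjunct2, THEN conjunct2, THEN conjunct2, THEN conjunct1])

lemma nullO: "emeasure \<sigma> (UNIV - \<Omega>) = 0"
  by (rule BT[unfolded bergman_type_def, THEN conjunct2, THEN conjunct2, THEN conjunct2, THEN conjunct2, THEN conjunct2, THEN conjunct2, THEN conjunct2, THEN conjunct2, THEN conjunct2, THEN conjunct2, THEN conjunct1])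

lemma Kin: "z \<in> \<Omega> \<Longrightarrow> K z \<in> bspace \<Omega> \<sigma>"
  using BT[unfolded bergman_type_def, THEN conjunct2, THEN conjunct2, THEN conjunct2, THEN conjunct2, THEN conjunct2, THEN conjunct2, THEN conjunct2, THEN conjunct2, THEN conjunct2, THEN conjunct2, THEN conjunct2, THEN conjunct1] by blast

lemma repro: "f \<in> bspace \<Omega> \<sigma> \<Longrightarrow> z \<in> \<Omega> \<Longrightarrow> f z = ip \<sigma> f (K z)"
  using BT[unfolded bergman_type_def, THEN conjunct2, THEN conjunct2, THEN conjunct2, THEN conjunct2, THEN conjunct2, THEN conjunct2, THEN conjunct2, THEN conjunct2, THEN conjunct2, THEN conjunct2, THEN conjunct2, THEN conjunct2, THEN conjunct1] by blast

lemma kap0: "0 \<le> \<kappa>"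
  by (rule BT[unfolded bergman_type_def, THEN conjunct2, THEN conjunct2, THEN conjunct2, THEN conjunct2, THEN conjunct2, THEN conjunct2, THEN conjunct2, THEN conjunct2, THEN conjunct2, THEN conjunct2, THEN conjunct2, THEN conjunct2, THEN conjunct2, THEN conjunct2, THEN conjunct2, THEN conjunct2, THEN conjunct2, THEN conjunct2, THEN conjunct1])

lemma kap2: "\<kappa> < 2"
  by (rule BT[unfolded bergman_type_def, THEN conjunct2, THEN conjunct2, THEN conjunct2, THEN conjunct2, THEN conjunct2, THEN conjunct2, THEN conjunct2, THEN conjunct2, THEN conjunct2, THEN conjunct2, THEN conjunct2, THEN conjunct2, THEN conjunct2, THEN conjunct2, THEN conjunct2, THEN conjunct2, THEN conjunct2, THEN conjunct2, THEN conjunct2, THEN conjunct1])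

lemma RFpos: "\<kappa> > 0 \<Longrightarrow> r > \<kappa> \<Longrightarrow> \<kappa> > s \<Longrightarrow> s > 0 \<Longrightarrow>
        (\<exists>M::real. \<forall>z\<in>\<Omega>. (\<integral>\<^sup>+ w. ennreal (cmod (ip \<sigma> (K z) (K w)) powr ((r + s) / 2)
            / (knorm \<sigma> K z powr s * knorm \<sigma> K w powr r)) \<partial>lam \<sigma> K) \<le> ennreal M)"
  using BT[unfolded bergman_type_def, THEN conjunct2, THEN conjunct2, THEN conjunct2, THEN conjunct2, THEN conjunct2, THEN conjunct2, THEN conjunct2, THEN conjunct2, THEN conjunct2, THEN conjunct2, THEN conjunct2, THEN conjunct2, THEN conjunct2, THEN conjunct2, THEN conjunct2, THEN conjunct2, THEN conjunct2, THEN conjunct2, THEN conjunct2, THEN conjunct2, THEN conjunct1] by blast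

lemma RF0: "\<kappa> = 0 \<Longrightarrow> r > 0 \<Longrightarrow>
        (\<exists>M::real. \<forall>z\<in>\<Omega>. (\<integral>\<^sup>+ w. ennreal (cmod (ip \<sigma> (K z) (K w)) powr ((r + r) / 2)
            / (knorm \<sigma> K z powr r * knorm \<sigma> K w powr r)) \<partial>lam \<sigma> K) \<le> ennreal M)"
  using BT[unfolded bergman_type_def, THEN conjunct2, THEN conjunct2, THEN conjunct2, THEN conjunct2, THEN conjunct2, THEN conjunct2, THEN conjunct2, THEN conjunct2, THEN conjunct2, THEN conjunct2, THEN conjunct2, THEN conjunct2, THEN conjunct2, THEN conjunct2, THEN conjunct2, THEN conjunct2, THEN conjunct2, THEN conjunct2, THEN conjunct2, THEN conjunct2, THEN conjunct2, THEN conjunct1] by blast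

interpretation S: finite_measure \<sigma> by (rule fin)
interpretation P: pair_sigma_finite \<sigma> \<sigma> 
  by (simp add: pair_sigma_finite.intro S.sigma_finite_measure_axioms)

lemma space_sigma[simp]: "space \<sigma> = UNIV"
  using sets_eq_imp_space_eq[OF sets_sigma] by simp

lemma measurable_sigma[simp]: "measurable \<sigma> N = measurable borel N"
  by (rule measurable_cong_sets[OF sets_sigma refl])

lemma AE_O: "AE x in \<sigma>. x \<in> \<Omega>"
proof -
  have "UNIV - \<Omega> \<in> null_sets \<sigma>" using nullO openO sets_sigma by (auto simp: null_sets_def)
  moreover have "{x \<in> space \<sigma>. x \<notin> \<Omega>} \<subseteq> UNIV - \<Omega>" by blast
  ultimately show ?thesis by (rule AE_I')
qed

lemma O_sets[measurable]: "\<Omega> \<in> sets borel" using openO by simp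

lemma ip_cnj: "ip \<sigma> f g = cnj (ip \<sigma> g f)"
proof -
  have "cnj (integral\<^sup>L \<sigma> (\<lambda>w. g w * cnj (f w))) = (integral\<^sup>L \<sigma> (\<lambda>w. cnj (g w * cnj (f w))))"
    by (rule Bochner_Integration.integral_cnj[symmetric])
  also have "\<dots> = integral\<^sup>L \<sigma> (\<lambda>w. f w * cnj (g w))"
    by (rule Bochner_Integration.integral_cong) (auto simp: mult.commute)
  finally show ?thesis unfolding ip_def by simp
qed

lemma K_sym: "z \<in> \<Omega> \<Longrightarrow> w \<in> \<Omega> \<Longrightarrow> K z w = cnj (K w z)"
  using repro[OF Kin, of z w] repro[OF Kin, of w z] ip_cnj by metis

lemma K_ip: "z \<in> \<Omega> \<Longrightarrow> w \<in> \<Omega> \<Longrightarrow> ip \<sigma> (K z) (K w) = K z w"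
  using repro[OF Kin, of z w] by simp

lemma K_meas[measurable]: "z \<in> \<Omega> \<Longrightarrow> K z \<in> borel_measurable borel"
  using Kin[of z] unfolding bspace_def by simp

lemma K_int: "z \<in> \<Omega> \<Longrightarrow> integrable \<sigma> (\<lambda>w. (cmod (K z w))\<^sup>2)"
  using Kin[of z] unfolding bspace_def by simp

lemma K_cont: "z \<in> \<Omega> \<Longrightarrow> continuous_on \<Omega> (K z)"
proof -
  assume z: "z \<in> \<Omega>"
  have "holo_fun \<Omega> (K z)" using Kin[OF z] unfolding bspace_def by simp
  then have "\<forall>w\<in>\<Omega>. isCont (K z) w" unfolding holo_fun_def
    using has_derivative_continuous by blast
  then show ?thesis by (simp add: continuous_at_imp_continuous_on)
qed

lemma K_meas_sigma[measurable]: "z \<in> \<Omega> \<Longrightarrow> K z \<in> borel_measurable \<sigma>"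
  using K_meas by simp

definition KK where "KK z w = (if z \<in> \<Omega> \<and> w \<in> \<Omega> then K z w else 0)"

lemma dense_seq:
  "\<exists>e :: nat \<Rightarrow> complex ^ 'n. (\<forall>i. e i \<in> \<Omega>) \<and>
    (\<forall>w r. w \<in> \<Omega> \<longrightarrow> r > 0 \<longrightarrow> (\<exists>i. dist w (e i) < r))"
proof -
  obtain D :: "(complex ^ 'n) set" where D: "countable D"
    "\<And>U. open U \<Longrightarrow> U \<noteq> {} \<Longrightarrow> \<exists>y\<in>D. y \<in> U"
    using countable_dense_exists by blast
  define E where "E = D \<inter> \<Omega>"
  have cE: "countable E" using D(1) E_def by simp
  have dE: "\<exists>y\<in>E. dist w y < r" if "w \<in> \<Omega>" "r > 0" for w r
  proof -
    have "open (ball w r \<inter> \<Omega>)" using openO by auto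
    moreover have "w \<in> ball w r \<inter> \<Omega>" using that by simp
    ultimately obtain y where "y \<in> D" "y \<in> ball w r \<inter> \<Omega>" using D(2) by blast
    then show ?thesis unfolding E_def by (auto simp: dist_commute)
  qed
  have ne: "E \<noteq> {}" using dE[OF zeroO, of 1] by auto
  show ?thesis
  proof (intro exI[of _ "from_nat_into E"] conjI allI impI)
    show "from_nat_into E i \<in> \<Omega>" for i using from_nat_into[OF ne] E_def by auto
    show "\<exists>i. dist w (from_nat_into E i) < r" if "w \<in> \<Omega>" "r > 0" for w r
      using dE[OF that] from_nat_into_surj[OF cE] by metis
  qed
qed

lemma KK_meas[measurable]: "(\<lambda>(z,w). KK z w) \<in> borel_measurable (\<sigma> \<Otimes>\<^sub>M \<sigma>)"
proof -
  from dense_seq obtain e :: "nat \<Rightarrow> complex ^ 'n" where e: "(\<forall>i. e i \<in> \<Omega>) \<and>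
    (\<forall>w r. w \<in> \<Omega> \<longrightarrow> r > 0 \<longrightarrow> (\<exists>i. dist w (e i) < r))" ..
  have eO: "\<And>i. e i \<in> \<Omega>" using e by blast
  have ed: "\<And>w r. w \<in> \<Omega> \<Longrightarrow> r > 0 \<Longrightarrow> \<exists>i. dist w (e i) < r" using e by blast
  define k where "k n w = (LEAST i. dist w (e i) < 1 / real (Suc n))" for n w
  define G where "G i p = (if fst p \<in> \<Omega> \<and> snd p \<in> \<Omega> then cnj (K (e i) (fst p)) else 0)" for i p
  define F where "F n = (\<lambda>p. G (k n (snd p)) p)" for n
  have Gm: "G i \<in> borel_measurable (\<sigma> \<Otimes>\<^sub>M \<sigma>)" for i
  proof -
    have Ke: "K (e i) \<in> borel_measurable \<sigma>" using eO by simp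
    have cm: "cnj \<in> borel_measurable (borel :: complex measure)"
      by (intro borel_measurable_continuous_onI continuous_intros)
    have c: "(\<lambda>p. cnj (K (e i) (fst p))) \<in> borel_measurable (\<sigma> \<Otimes>\<^sub>M \<sigma>)"
      by (rule measurable_compose[OF measurable_compose[OF measurable_fst Ke] cm])
    have "\<Omega> \<times> \<Omega> \<in> sets (\<sigma> \<Otimes>\<^sub>M \<sigma>)"
      by (rule pair_measureI) (auto simp: sets_sigma)
    moreover have "{p \<in> space (\<sigma> \<Otimes>\<^sub>M \<sigma>). fst p \<in> \<Omega> \<and> snd p \<in> \<Omega>} = \<Omega> \<times> \<Omega>"
      by (auto simp: space_pair_measure)
    ultimately show ?thesis unfolding G_def
      by (intro measurable_If c) auto
  qed
  have km: "(\<lambda>p. k n (snd p)) \<in> measurable (\<sigma> \<Otimes>\<^sub>M \<sigma>) (count_space UNIV)" for n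
  proof -
    have "(\<lambda>w. k n w) \<in> measurable borel (count_space UNIV)"
      unfolding k_def by measurable
    then have "(\<lambda>w. k n w) \<in> measurable \<sigma> (count_space UNIV)" by simp
    then show ?thesis by (rule measurable_compose[OF measurable_snd])
  qed
  have Fm: "F n \<in> borel_measurable (\<sigma> \<Otimes>\<^sub>M \<sigma>)" for n
    unfolding F_def by (rule measurable_compose_countable[OF Gm km])
  have lim: "(\<lambda>n. F n p) \<longlonglongrightarrow> (case p of (z, w) \<Rightarrow> KK z w)" for p
  proof (cases p)
    case (Pair z w)
    show ?thesis
    proof (cases "z \<in> \<Omega> \<and> w \<in> \<Omega>")
      case False
      then show ?thesis using Pair by (auto simp: F_def G_def KK_def)
    next
      case True
      have kd: "dist w (e (k n w)) < 1 / real (Suc n)" for n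
      proof -
        obtain i where "dist w (e i) < 1 / real (Suc n)" using ed[of w "1 / real (Suc n)"] True by auto
        then show ?thesis unfolding k_def by (rule LeastI)
      qed
      have conv: "(\<lambda>n. e (k n w)) \<longlonglongrightarrow> w"
      proof (rule metric_LIMSEQ_I)
        fix r :: real assume r: "r > 0"
        obtain N :: nat where N: "inverse (Suc N) < r" using reals_Archimedean[OF r] by blast
        show "\<exists>no. \<forall>n\<ge>no. dist (e (k n w)) w < r"
        proof (intro exI allI impI)
          fix n assume "N \<le> n"
          then have "1 / real (Suc n) \<le> inverse (Suc N)"
            by (simp add: field_simps)
          then show "dist (e (k n w)) w < r" using kd[of n] N by (simp add: dist_commute)
        qed
      qed
      have "isCont (K z) w"
        using K_cont[of z] True openO continuous_on_eq_continuous_at by blast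
      then have "(\<lambda>n. K z (e (k n w))) \<longlonglongrightarrow> K z w"
        using conv isCont_tendsto_compose by blast
      moreover have "F n p = K z (e (k n w))" for n
        using True Pair K_sym[of z "e (k n w)"] eO by (simp add: F_def G_def)
      ultimately show ?thesis using True Pair by (simp add: KK_def)
    qed
  qed
  show ?thesis by (rule borel_measurable_LIMSEQ_metric[OF Fm lim])
qed

lemma cnj_meas: "cnj \<in> borel_measurable (borel :: complex measure)"
  by (intro borel_measurable_continuous_onI continuous_intros)

definition T where "T z w = cmod (KK z w)"
definition kn where "kn z = (if z \<in> \<Omega> then sqrt (cmod (KK z z)) else 1)"

lemma T_meas: "(\<lambda>(z,w). T z w) \<in> borel_measurable (\<sigma> \<Otimes>\<^sub>M \<sigma>)"
proof -
  have "(\<lambda>p. norm ((\<lambda>(z,w). KK z w) p)) \<in> borel_measurable (\<sigma> \<Otimes>\<^sub>M \<sigma>)"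
    by (rule measurable_compose[OF KK_meas borel_measurable_norm])
  moreover have "(\<lambda>p. norm ((\<lambda>(z,w). KK z w) p)) = (\<lambda>(z,w). T z w)"
    by (auto simp: T_def)
  ultimately show ?thesis by simp
qed

lemma T_meas2: "(\<lambda>w. T z w) \<in> borel_measurable \<sigma>"
  using measurable_Pair2[OF T_meas, of z] by simp

lemma T_meas1: "(\<lambda>z. T z w) \<in> borel_measurable \<sigma>"
  using measurable_Pair1[OF T_meas, of w] by simp

lemma T_nonneg: "T z w \<ge> 0" by (simp add: T_def)

lemma T_sym: "T z w = T w z"
  unfolding T_def KK_def using K_sym[of z w] by auto

lemma diag_meas: "(\<lambda>z. KK z z) \<in> borel_measurable \<sigma>"
proof -
  have "(\<lambda>z. (z, z)) \<in> measurable \<sigma> (\<sigma> \<Otimes>\<^sub>M \<sigma>)"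
    by (intro measurable_Pair measurable_ident_sets refl)
  from measurable_compose[OF this KK_meas] show ?thesis by simp
qed

lemma kn_meas[measurable]: "kn \<in> borel_measurable \<sigma>"
proof -
  have a: "(\<lambda>z. sqrt (norm (KK z z))) \<in> borel_measurable \<sigma>"
    by (rule measurable_compose[OF measurable_compose[OF diag_meas borel_measurable_norm] borel_measurable_sqrt])
  have "{x \<in> space \<sigma>. x \<in> \<Omega>} \<in> sets \<sigma>" using sets_sigma by simp
  then have "(\<lambda>z. if z \<in> \<Omega> then sqrt (norm (KK z z)) else 1) \<in> borel_measurable \<sigma>"
    by (intro measurable_If a) auto
  then show ?thesis unfolding kn_def by simp
qed

lemma Kzz: "z \<in> \<Omega> \<Longrightarrow> K z z = of_real (LINT w|\<sigma>. (cmod (K z w))\<^sup>2)"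
proof -
  assume z: "z \<in> \<Omega>"
  have "K z z = ip \<sigma> (K z) (K z)" using K_ip[OF z z] by simp
  also have "\<dots> = integral\<^sup>L \<sigma> (\<lambda>w. complex_of_real ((cmod (K z w))\<^sup>2))"
    by (simp only: ip_def complex_norm_square)
  also have "\<dots> = of_real (LINT w|\<sigma>. (cmod (K z w))\<^sup>2)"
    by (rule integral_complex_of_real)
  finally show ?thesis .
qed

lemma knorm_eq: "z \<in> \<Omega> \<Longrightarrow> knorm \<sigma> K z = kn z"
proof -
  assume z: "z \<in> \<Omega>"
  have nn: "0 \<le> (LINT w|\<sigma>. (cmod (K z w))\<^sup>2)" by (rule integral_nonneg_AE) simp
  show ?thesis unfolding knorm_def l2norm_def kn_def KK_def using z Kzz[OF z] nn by simp
qed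

lemma one_in: "(\<lambda>_. 1) \<in> bspace \<Omega> \<sigma>"
proof -
  have "holo_fun \<Omega> (\<lambda>_. 1)" unfolding holo_fun_def
  proof (intro conjI ballI exI[of _ "\<lambda>_. 0"] allI)
    show "open \<Omega>" by (rule openO)
    show "((\<lambda>_. 1) has_derivative (\<lambda>_. 0)) (at z)" for z :: "complex ^ 'n"
      by (rule has_derivative_const)
  qed simp
  then show ?thesis unfolding bspace_def by (simp add: S.integrable_const)
qed

lemma kn_pos: "kn z > 0"
proof (cases "z \<in> \<Omega>")
  case False then show ?thesis by (simp add: kn_def)
next
  case z: True
  have nn: "0 \<le> (LINT w|\<sigma>. (cmod (K z w))\<^sup>2)" by (rule integral_nonneg_AE) simp
  have ne: "(LINT w|\<sigma>. (cmod (K z w))\<^sup>2) \<noteq> 0"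
  proof
    assume "(LINT w|\<sigma>. (cmod (K z w))\<^sup>2) = 0"
    then have "AE w in \<sigma>. (cmod (K z w))\<^sup>2 = 0"
      using integral_nonneg_eq_0_iff_AE[OF K_int[OF z]] by simp
    then have ae: "AE w in \<sigma>. (\<lambda>_. 1) w * cnj (K z w) = 0" by (auto elim!: eventually_mono)
    have "(1::complex) = ip \<sigma> (\<lambda>_. 1) (K z)" using repro[OF one_in z] by simp
    also have "\<dots> = integral\<^sup>L \<sigma> (\<lambda>w. 0)" unfolding ip_def
      by (rule integral_cong_AE) (use ae measurable_compose[OF K_meas[OF z] cnj_meas] in auto)
    finally show False by simp
  qed
  have "cmod (KK z z) = (LINT w|\<sigma>. (cmod (K z w))\<^sup>2)"
    using Kzz[OF z] z nn by (simp add: KK_def)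
  moreover have "0 < (LINT w|\<sigma>. (cmod (K z w))\<^sup>2)" using nn ne by linarith
  ultimately show ?thesis using z by (simp add: kn_def)
qed

lemma T_meas2'[measurable]: "(\<lambda>w. T z w) \<in> borel_measurable \<sigma>" by (rule T_meas2)
lemma T_meas2b[measurable]: "(\<lambda>w. T z w) \<in> borel_measurable borel" using T_meas2 by simp
lemma kn_measb[measurable]: "kn \<in> borel_measurable borel" using kn_meas by simp

lemma density_cong_AE': "AE x in M. f x = g x \<Longrightarrow> density M f = density M g"
  unfolding density_def by (auto intro!: measure_of_eq nn_integral_cong_AE sets.space_closed)

lemma kn2_meas[measurable]: "(\<lambda>z. ennreal ((kn z)\<^sup>2)) \<in> borel_measurable \<sigma>"
  by measurable

lemma lam_eq: "lam \<sigma> K = density \<sigma> (\<lambda>z. ennreal ((kn z)\<^sup>2))"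
  unfolding lam_def
  by (rule density_cong_AE') (use AE_O in \<open>auto elim!: eventually_mono simp: knorm_eq\<close>)

lemma AE_lam: "AE x in lam \<sigma> K. x \<in> \<Omega>"
  unfolding lam_eq using AE_O by (subst AE_density) (auto elim!: eventually_mono intro: kn2_meas)

lemma wmeas_eq: "wmeas \<sigma> K p = density \<sigma> (\<lambda>z. ennreal (kn z powr (2 - p)))"
proof -
  have "wmeas \<sigma> K p = density (lam \<sigma> K) (\<lambda>w. ennreal (kn w powr (- p)))"
    unfolding wmeas_def
    by (rule density_cong_AE') (use AE_lam in \<open>auto elim!: eventually_mono simp: knorm_eq\<close>)
  also have "\<dots> = density \<sigma> (\<lambda>z. ennreal ((kn z)\<^sup>2) * ennreal (kn z powr (- p)))"
    unfolding lam_eq by (rule density_density_eq) measurable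
  also have "\<dots> = density \<sigma> (\<lambda>z. ennreal (kn z powr (2 - p)))"
  proof (rule arg_cong[where f="density \<sigma>"], rule ext)
    fix z
    have "(kn z)\<^sup>2 * kn z powr (- p) = kn z powr (2 - p)"
      using kn_pos[of z] by (simp add: powr_diff powr_minus field_simps)
    then show "ennreal ((kn z)\<^sup>2) * ennreal (kn z powr (- p)) = ennreal (kn z powr (2 - p))"
      by (simp add: ennreal_mult[symmetric])
  qed
  finally show ?thesis .
qed

lemma T_ip: "z \<in> \<Omega> \<Longrightarrow> w \<in> \<Omega> \<Longrightarrow> cmod (ip \<sigma> (K z) (K w)) = T z w"
  by (simp add: K_ip T_def KK_def)

lemma RF_conv:
  assumes s: "0 < s"
    and M: "\<forall>z\<in>\<Omega>. (\<integral>\<^sup>+ w. ennreal (cmod (ip \<sigma> (K z) (K w)) / (knorm \<sigma> K z powr s * knorm \<sigma> K w powr (2 - s))) \<partial>lam \<sigma> K) \<le> ennreal M"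
    and z: "z \<in> \<Omega>"
  shows "(\<integral>\<^sup>+ w. ennreal (T z w * kn w powr s) \<partial>\<sigma>) \<le> ennreal (max M 1 * kn z powr s)"
proof -
  define c where "c = 1 / kn z powr s"
  have c: "c > 0" using kn_pos[of z] by (simp add: c_def)
  define I where "I = (\<integral>\<^sup>+ w. ennreal (T z w * kn w powr s) \<partial>\<sigma>)"
  have "(\<integral>\<^sup>+ w. ennreal (cmod (ip \<sigma> (K z) (K w)) / (knorm \<sigma> K z powr s * knorm \<sigma> K w powr (2 - s))) \<partial>lam \<sigma> K)
      = (\<integral>\<^sup>+ w. ennreal (T z w / (kn z powr s * kn w powr (2 - s))) \<partial>lam \<sigma> K)"
    by (rule nn_integral_cong_AE) (use AE_lam in \<open>auto elim!: eventually_mono simp: knorm_eq z T_ip\<close>)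
  also have "\<dots> = (\<integral>\<^sup>+ w. ennreal ((kn w)\<^sup>2) * ennreal (T z w / (kn z powr s * kn w powr (2 - s))) \<partial>\<sigma>)"
    unfolding lam_eq by (rule nn_integral_density) measurable
  also have "\<dots> = (\<integral>\<^sup>+ w. ennreal c * ennreal (T z w * kn w powr s) \<partial>\<sigma>)"
  proof (rule nn_integral_cong)
    fix w
    have "(kn w)\<^sup>2 * (T z w / (kn z powr s * kn w powr (2 - s))) = c * (T z w * kn w powr s)"
      using kn_pos[of w] kn_pos[of z] by (simp add: c_def powr_diff field_simps)
    then show "ennreal ((kn w)\<^sup>2) * ennreal (T z w / (kn z powr s * kn w powr (2 - s))) = ennreal c * ennreal (T z w * kn w powr s)"
      using c T_nonneg[of z w] kn_pos[of z] kn_pos[of w] by (simp add: ennreal_mult[symmetric])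
  qed
  also have "\<dots> = ennreal c * I" unfolding I_def by (rule nn_integral_cmult) measurable
  finally have cI: "ennreal c * I \<le> ennreal M" using M z by auto
  have "I = ennreal (kn z powr s) * (ennreal c * I)"
    using c kn_pos[of z] by (simp add: c_def mult.assoc[symmetric] ennreal_mult[symmetric])
  also have "\<dots> \<le> ennreal (kn z powr s) * ennreal M" by (rule mult_left_mono[OF cI]) simp
  also have "\<dots> \<le> ennreal (kn z powr s) * ennreal (max M 1)"
    by (intro mult_left_mono ennreal_leI) auto
  also have "\<dots> = ennreal (max M 1 * kn z powr s)"
    by (simp add: ennreal_mult[symmetric] mult.commute)
  finally show ?thesis unfolding I_def .
qed

lemma Pop_bound:
  assumes z: "z \<in> \<Omega>"
  shows "ennreal (cmod (Pop \<sigma> K f z)) \<le> (\<integral>\<^sup>+ w. ennreal (T z w * cmod (f w)) \<partial>\<sigma>)"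
proof -
  have eq: "(\<integral>\<^sup>+ w. ennreal (norm (ip \<sigma> (K w) (K z) * f w)) \<partial>\<sigma>) = (\<integral>\<^sup>+ w. ennreal (T z w * cmod (f w)) \<partial>\<sigma>)"
  proof (rule nn_integral_cong_AE)
    show "AE w in \<sigma>. ennreal (norm (ip \<sigma> (K w) (K z) * f w)) = ennreal (T z w * cmod (f w))"
      using AE_O by (auto elim!: eventually_mono simp: norm_mult T_ip z T_sym[of z])
  qed
  show ?thesis
  proof (cases "integrable \<sigma> (\<lambda>w. ip \<sigma> (K w) (K z) * f w)")
    case True
    from integral_norm_bound_ennreal[OF True] show ?thesis unfolding Pop_def eq .
  next
    case False
    then show ?thesis unfolding Pop_def by (simp add: not_integrable_integral_eq)
  qed
qed


lemma T_ip': "z \<in> \<Omega> \<Longrightarrow> w \<in> \<Omega> \<Longrightarrow> cmod (ip \<sigma> (K w) (K z)) = T z w"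
  using T_ip[of w z] T_sym[of z w] by simp

lemma partA_Lp:
  assumes k: "\<kappa> = 0" and p: "1 \<le> p"
  shows "P_bounded_Lp \<sigma> K (wmeas \<sigma> K p) p"
proof -
  obtain M where M: "\<forall>z\<in>\<Omega>. (\<integral>\<^sup>+ w. ennreal (cmod (ip \<sigma> (K z) (K w)) powr ((1 + 1) / 2)
            / (knorm \<sigma> K z powr 1 * knorm \<sigma> K w powr 1)) \<partial>lam \<sigma> K) \<le> ennreal M"
    using RF0[OF k, of 1] by auto
  have M': "\<forall>z\<in>\<Omega>. (\<integral>\<^sup>+ w. ennreal (cmod (ip \<sigma> (K z) (K w)) / (knorm \<sigma> K z powr 1 * knorm \<sigma> K w powr (2 - 1))) \<partial>lam \<sigma> K) \<le> ennreal M"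
    using M by simp
  define C where "C = max M 1"
  have C: "C > 0" by (simp add: C_def)
  have H: "(\<integral>\<^sup>+ w. ennreal (T z w * kn w) \<partial>\<sigma>) \<le> ennreal (C * kn z)" if z: "z \<in> \<Omega>" for z
    using RF_conv[OF _ M' z] kn_pos by (simp add: C_def abs_of_pos)
  show ?thesis unfolding P_bounded_Lp_def
  proof (intro exI ballI)
    fix f :: "complex ^ 'n \<Rightarrow> complex" assume f: "f \<in> borel_measurable (wmeas \<sigma> K p)"
    have fm: "f \<in> borel_measurable \<sigma>"
      using f unfolding wmeas_eq by (simp add: measurable_cong_sets[OF sets_density refl])
    have gm: "(\<lambda>w. cmod (f w)) \<in> borel_measurable \<sigma>" using fm by measurable
    have sf: "sigma_finite_measure \<sigma>" by (rule S.sigma_finite_measure_axioms)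
    have "(\<integral>\<^sup>+ z. ennreal (cmod (Pop \<sigma> K f z) powr p) \<partial>density \<sigma> (\<lambda>z. ennreal (kn z powr (2 - p))))
      \<le> ennreal (C powr (p - 1) * C) * (\<integral>\<^sup>+ w. ennreal (cmod (f w) powr p) \<partial>density \<sigma> (\<lambda>z. ennreal (kn z powr (2 - p))))"
    proof (rule schur[OF sf space_sigma p C less_imp_le[OF C] _ T_nonneg kn_meas kn_pos _ _ gm _ AE_O])
      show "(\<lambda>x. T (fst x) (snd x)) \<in> borel_measurable (\<sigma> \<Otimes>\<^sub>M \<sigma>)"
        using T_meas by (simp add: case_prod_beta')
      show "(\<lambda>z. kn z powr (2 - p)) \<in> borel_measurable \<sigma>" by measurable
      show "0 \<le> kn w powr (2 - p)" for w by simp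
      show "0 \<le> cmod (f w)" for w by simp
      show "\<And>z. z \<in> \<Omega> \<Longrightarrow> (\<integral>\<^sup>+ w. ennreal (T z w * kn w) \<partial>\<sigma>) \<le> ennreal (C * kn z)" by (rule H)
      show "(\<integral>\<^sup>+ z. ennreal (T z w * kn z powr (p - 1) * kn z powr (2 - p)) \<partial>\<sigma>)
          \<le> ennreal (C * kn w powr (p - 1) * kn w powr (2 - p))" if w: "w \<in> \<Omega>" for w
      proof -
        have e: "kn x powr (p - 1) * kn x powr (2 - p) = kn x" for x
          using kn_pos[of x] by (simp add: powr_add[symmetric])
        have "(\<integral>\<^sup>+ z. ennreal (T z w * kn z powr (p - 1) * kn z powr (2 - p)) \<partial>\<sigma>) = (\<integral>\<^sup>+ z. ennreal (T w z * kn z) \<partial>\<sigma>)"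
          by (intro nn_integral_cong) (simp add: mult.assoc e T_sym[of _ w])
        also have "\<dots> \<le> ennreal (C * kn w)" by (rule H[OF w])
        finally show ?thesis by (simp add: mult.assoc e)
      qed
      show "0 \<le> cmod (Pop \<sigma> K f z)" for z by simp
      show "\<And>z. z \<in> \<Omega> \<Longrightarrow> ennreal (cmod (Pop \<sigma> K f z)) \<le> (\<integral>\<^sup>+ w. ennreal (T z w * cmod (f w)) \<partial>\<sigma>)"
        by (rule Pop_bound)
    qed
    then show "(\<integral>\<^sup>+ z. ennreal (cmod (Pop \<sigma> K f z) powr p) \<partial>wmeas \<sigma> K p)
        \<le> ennreal (C powr (p - 1) * C) * (\<integral>\<^sup>+ w. ennreal (cmod (f w) powr p) \<partial>wmeas \<sigma> K p)"
      unfolding wmeas_eq .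
  qed
qed

lemma partA_sup:
  assumes k: "\<kappa> = 0"
  shows "P_bounded_wsup \<Omega> \<sigma> K"
proof -
  obtain M where M: "\<forall>z\<in>\<Omega>. (\<integral>\<^sup>+ w. ennreal (cmod (ip \<sigma> (K z) (K w)) powr ((1 + 1) / 2)
            / (knorm \<sigma> K z powr 1 * knorm \<sigma> K w powr 1)) \<partial>lam \<sigma> K) \<le> ennreal M"
    using RF0[OF k, of 1] by auto
  have M': "\<forall>z\<in>\<Omega>. (\<integral>\<^sup>+ w. ennreal (cmod (ip \<sigma> (K z) (K w)) / (knorm \<sigma> K z powr 1 * knorm \<sigma> K w powr (2 - 1))) \<partial>lam \<sigma> K) \<le> ennreal M"
    using M by simp
  define C where "C = max M 1"
  have C: "C > 0" by (simp add: C_def)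
  have H: "(\<integral>\<^sup>+ w. ennreal (T z w * kn w) \<partial>\<sigma>) \<le> ennreal (C * kn z)" if z: "z \<in> \<Omega>" for z
    using RF_conv[OF _ M' z] kn_pos by (simp add: C_def abs_of_pos)
  show ?thesis unfolding P_bounded_wsup_def
  proof (intro exI ballI)
    fix f :: "complex ^ 'n \<Rightarrow> complex" assume f: "f \<in> borel_measurable \<sigma>"
    define S where "S = (SUP w\<in>\<Omega>. ennreal (cmod (f w) / knorm \<sigma> K w))"
    show "(SUP w\<in>\<Omega>. ennreal (cmod (Pop \<sigma> K f w) / knorm \<sigma> K w)) \<le> ennreal C * S"
    proof (rule SUP_least)
      fix z assume z: "z \<in> \<Omega>"
      have "ennreal (cmod (Pop \<sigma> K f z)) \<le> (\<integral>\<^sup>+ w. ennreal (T z w * cmod (f w)) \<partial>\<sigma>)"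
        by (rule Pop_bound[OF z])
      also have "\<dots> \<le> (\<integral>\<^sup>+ w. ennreal (T z w * kn w) * S \<partial>\<sigma>)"
      proof (rule nn_integral_mono_AE)
        show "AE w in \<sigma>. ennreal (T z w * cmod (f w)) \<le> ennreal (T z w * kn w) * S"
          using AE_O
        proof (rule eventually_mono)
          fix w assume w: "w \<in> \<Omega>"
          have "T z w * cmod (f w) = (T z w * kn w) * (cmod (f w) / kn w)"
            using kn_pos[of w] by simp
          then have "ennreal (T z w * cmod (f w)) = ennreal (T z w * kn w) * ennreal (cmod (f w) / kn w)"
            by (simp only: ennreal_mult[OF mult_nonneg_nonneg[OF T_nonneg less_imp_le[OF kn_pos]] divide_nonneg_pos[OF norm_ge_zero kn_pos]])
          then have "ennreal (T z w * cmod (f w)) = ennreal (T z w * kn w) * ennreal (cmod (f w) / knorm \<sigma> K w)"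
            using w by (simp add: knorm_eq)
          also have "\<dots> \<le> ennreal (T z w * kn w) * S"
            unfolding S_def by (intro mult_left_mono SUP_upper w) simp
          finally show "ennreal (T z w * cmod (f w)) \<le> ennreal (T z w * kn w) * S" .
        qed
      qed
      also have "\<dots> = (\<integral>\<^sup>+ w. ennreal (T z w * kn w) \<partial>\<sigma>) * S"
        by (rule nn_integral_multc) measurable
      also have "\<dots> \<le> ennreal (C * kn z) * S" by (rule mult_right_mono[OF H[OF z]]) simp
      finally have A: "ennreal (cmod (Pop \<sigma> K f z)) \<le> ennreal (C * kn z) * S" .
      have "ennreal (cmod (Pop \<sigma> K f z) / knorm \<sigma> K z) = ennreal (cmod (Pop \<sigma> K f z)) * ennreal (1 / kn z)"
        using z kn_pos[of z] by (simp add: knorm_eq ennreal_mult[symmetric])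
      also have "\<dots> \<le> ennreal (C * kn z) * S * ennreal (1 / kn z)"
        by (rule mult_right_mono[OF A]) simp
      also have "\<dots> = ennreal C * S * (ennreal (kn z) * ennreal (1 / kn z))"
        using C kn_pos[of z] by (simp add: ennreal_mult mult_ac)
      also have "ennreal (kn z) * ennreal (1 / kn z) = 1"
        using kn_pos[of z] by (simp add: ennreal_mult[symmetric])
      finally show "ennreal (cmod (Pop \<sigma> K f z) / knorm \<sigma> K z) \<le> ennreal C * S" by simp
    qed
  qed
qed

lemma RF_pos_s:
  assumes k: "\<kappa> > 0" and s: "0 < s" "s < \<kappa>" "s < 2 - \<kappa>"
  obtains C where "C > 0" "\<And>z. z \<in> \<Omega> \<Longrightarrow> (\<integral>\<^sup>+ w. ennreal (T z w * kn w powr s) \<partial>\<sigma>) \<le> ennreal (C * kn z powr s)"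
proof -
  obtain M where M: "\<forall>z\<in>\<Omega>. (\<integral>\<^sup>+ w. ennreal (cmod (ip \<sigma> (K z) (K w)) powr ((2 - s + s) / 2)
            / (knorm \<sigma> K z powr s * knorm \<sigma> K w powr (2 - s))) \<partial>lam \<sigma> K) \<le> ennreal M"
    using RFpos[OF k, of "2 - s" s] s by auto
  have M': "\<forall>z\<in>\<Omega>. (\<integral>\<^sup>+ w. ennreal (cmod (ip \<sigma> (K z) (K w)) / (knorm \<sigma> K z powr s * knorm \<sigma> K w powr (2 - s))) \<partial>lam \<sigma> K) \<le> ennreal M"
    using M by simp
  show ?thesis
    by (rule that[of "max M 1"]) (auto intro: RF_conv[OF s(1) M'])
qed

lemma partB:
  assumes k: "\<kappa> > 0" and p: "1 < p"
  shows "P_bounded_Lp \<sigma> K \<sigma> p"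
proof -
  define m where "m = min \<kappa> (2 - \<kappa>)"
  have m: "m > 0" using k kap2 by (simp add: m_def)
  define s1 where "s1 = m / (2 * p)"
  define s2 where "s2 = s1 * (p - 1)"
  have s1: "0 < s1" "s1 < \<kappa>" "s1 < 2 - \<kappa>"
  proof -
    have "s1 < m" using m p mult_pos_pos[OF m, of p] by (simp add: s1_def field_simps)
    then show "0 < s1" "s1 < \<kappa>" "s1 < 2 - \<kappa>" using m p by (auto simp: s1_def m_def)
  qed
  have s2: "0 < s2" "s2 < \<kappa>" "s2 < 2 - \<kappa>"
  proof -
    have mp: "0 < m * p" using m p by simp
    have "0 < m + m * p" using m mp by linarith
    then have "s2 < m" using m p by (simp add: s2_def s1_def field_simps)
    moreover have "0 < s2" using s1(1) p by (simp add: s2_def)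
    ultimately show "0 < s2" "s2 < \<kappa>" "s2 < 2 - \<kappa>" by (auto simp: m_def)
  qed
  obtain C1 where C1: "C1 > 0" and H1: "\<And>z. z \<in> \<Omega> \<Longrightarrow> (\<integral>\<^sup>+ w. ennreal (T z w * kn w powr s1) \<partial>\<sigma>) \<le> ennreal (C1 * kn z powr s1)"
    using RF_pos_s[OF k s1] by blast
  obtain C2 where C2: "C2 > 0" and H2: "\<And>z. z \<in> \<Omega> \<Longrightarrow> (\<integral>\<^sup>+ w. ennreal (T z w * kn w powr s2) \<partial>\<sigma>) \<le> ennreal (C2 * kn z powr s2)"
    using RF_pos_s[OF k s2] by blast
  show ?thesis unfolding P_bounded_Lp_def
  proof (intro exI ballI)
    fix f :: "complex ^ 'n \<Rightarrow> complex" assume f: "f \<in> borel_measurable \<sigma>"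
    have gm: "(\<lambda>w. cmod (f w)) \<in> borel_measurable \<sigma>" using f by measurable
    have sf: "sigma_finite_measure \<sigma>" by (rule S.sigma_finite_measure_axioms)
    have vm: "(\<lambda>z. kn z powr s1) \<in> borel_measurable \<sigma>" by measurable
    have v0: "\<And>w. kn w powr s1 > 0" using kn_pos by (simp add: order.strict_implies_not_eq[symmetric])
    have "(\<integral>\<^sup>+ z. ennreal (cmod (Pop \<sigma> K f z) powr p) \<partial>density \<sigma> (\<lambda>z. ennreal 1))
      \<le> ennreal (C1 powr (p - 1) * C2) * (\<integral>\<^sup>+ w. ennreal (cmod (f w) powr p) \<partial>density \<sigma> (\<lambda>z. ennreal 1))"
    proof (rule schur[OF sf space_sigma less_imp_le[OF p] C1 less_imp_le[OF C2] _ T_nonneg vm v0 _ _ gm _ AE_O])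
      show "(\<lambda>x. T (fst x) (snd x)) \<in> borel_measurable (\<sigma> \<Otimes>\<^sub>M \<sigma>)"
        using T_meas by (simp add: case_prod_beta')
      show "(\<lambda>z. 1) \<in> borel_measurable \<sigma>" by simp
      show "0 \<le> (1::real)" by simp
      show "0 \<le> cmod (f w)" for w by simp
      show "\<And>z. z \<in> \<Omega> \<Longrightarrow> (\<integral>\<^sup>+ w. ennreal (T z w * kn w powr s1) \<partial>\<sigma>) \<le> ennreal (C1 * kn z powr s1)" by (rule H1)
      show "(\<integral>\<^sup>+ z. ennreal (T z w * (kn z powr s1) powr (p - 1) * 1) \<partial>\<sigma>)
          \<le> ennreal (C2 * (kn w powr s1) powr (p - 1) * 1)" if w: "w \<in> \<Omega>" for w
      proof -
        have e: "(kn x powr s1) powr (p - 1) = kn x powr s2" for x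
          by (simp add: powr_powr s2_def)
        have "(\<integral>\<^sup>+ z. ennreal (T z w * (kn z powr s1) powr (p - 1) * 1) \<partial>\<sigma>) = (\<integral>\<^sup>+ z. ennreal (T w z * kn z powr s2) \<partial>\<sigma>)"
          by (intro nn_integral_cong) (simp add: e T_sym[of _ w])
        also have "\<dots> \<le> ennreal (C2 * kn w powr s2)" by (rule H2[OF w])
        finally show ?thesis by (simp add: e)
      qed
      show "0 \<le> cmod (Pop \<sigma> K f z)" for z by simp
      show "\<And>z. z \<in> \<Omega> \<Longrightarrow> ennreal (cmod (Pop \<sigma> K f z)) \<le> (\<integral>\<^sup>+ w. ennreal (T z w * cmod (f w)) \<partial>\<sigma>)"
        by (rule Pop_bound)
    qed
    then show "(\<integral>\<^sup>+ z. ennreal (cmod (Pop \<sigma> K f z) powr p) \<partial>\<sigma>)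
        \<le> ennreal (C1 powr (p - 1) * C2) * (\<integral>\<^sup>+ w. ennreal (cmod (f w) powr p) \<partial>\<sigma>)"
      by (simp add: density_1)
  qed
qed

end

theorem lemma2p8:
  fixes \<Omega> :: "(complex ^ 'n) set"
    and \<phi> :: "complex ^ 'n \<Rightarrow> complex ^ 'n \<Rightarrow> complex ^ 'n"
    and d :: "complex ^ 'n \<Rightarrow> complex ^ 'n \<Rightarrow> real"
    and \<sigma> :: "(complex ^ 'n) measure"
    and K :: "complex ^ 'n \<Rightarrow> complex ^ 'n \<Rightarrow> complex"
    and \<kappa> :: real
  assumes "bergman_type \<Omega> \<phi> d \<sigma> K \<kappa>"
  shows "(\<kappa> = 0 \<longrightarrow> (\<forall>p::real. 1 \<le> p \<longrightarrow> P_bounded_Lp \<sigma> K (wmeas \<sigma> K p) p)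
                      \<and> P_bounded_wsup \<Omega> \<sigma> K)
       \<and> (\<kappa> > 0 \<longrightarrow> (\<forall>p::real. 1 < p \<longrightarrow> P_bounded_Lp \<sigma> K \<sigma> p))"
proof -
  interpret bt \<Omega> \<phi> d \<sigma> K \<kappa> by (rule bt.intro) (rule assms)
  show ?thesis using partA_Lp partA_sup partB by blast
qed

end
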